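(* Let $\alpha\le\omega_1$. 1) For every $B\in\mathcal B_\alpha$: (i) $D_{\mathrm{iie}}^{\alpha'}(B)$ is finite; (ii) if $\alpha$ is even, $D_{\mathrm{iie}}^{\alpha'}(B)$ is either empty or equal to $\{\emptyset\}$. 2) For every $A\in\mathcal A_\alpha$: (i) $D_{\mathrm{iie}}^{\alpha'}(D_{\mathrm{iie}}(A))$ is finite; (ii) if $\alpha$ is even, $D_{\mathrm{iie}}^{\alpha'}(D_{\mathrm{iie}}(A))$ is either empty or equal to $\{\emptyset\}$.
   Context: $\omega^{<\omega}$ finite sequences of naturals, $s^\frown t$ concatenation (also for $t\in\omega^\omega$), $h^\frown B=\{h^\frown s:s\in B\}$. For $S\subset\omega^{<\omega}\cup\omega^\omega$, $\mathrm{cl}_{\mathrm{Tr}}(S)$ is the set of finite initial segments of elements of $S$. For a tree $T$, $D_{\mathrm{iie}}(T)=\{t\in T: T$ contains infinitely many pairwise incomparable extensions of $t$ of pairwise different lengths$\}$; for any $S$, $D_{\mathrm{iie}}(S)=D_{\mathrm{iie}}(\mathrm{cl}_{\mathrm{Tr}}(S))$, $D^0_{\mathrm{iie}}(S)=\mathrm{cl}_{\mathrm{Tr}}(S)$, $D^{\beta+1}_{\mathrm{iie}}=D_{\mathrm{iie}}\circ D^\beta_{\mathrm{iie}}$, $D^\lambda_{\mathrm{iie}}(S)=\bigcap_{\beta<\lambda}D^\beta_{\mathrm{iie}}(S)$ for limit $\lambda$. For $\alpha=\lambda+2n+i$ ($\lambda$ limit or 0, $n\in\omega$, $i\in\{0,1\}$),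 $\alpha'=\lambda+n$; parity of $\alpha$ is that of $i$ (so $\omega_1$ is even, $\omega_1'=\omega_1$). A forking sequence is a sequence $(f_n)_{n\in\omega}$ of nonempty elements of $\omega^{<\omega}$ with $f_n(0)\ne f_m(0)$ for $n\ne m$. Finite broom sets: $\mathcal B_0=\{\{\emptyset\}\}$; for $1\le\alpha<\omega_1$ odd, $\mathcal B_\alpha=\mathcal B_{<\alpha}\cup\{h^\frown B: B\in\mathcal B_{\alpha-1},h\in\omega^{<\omega}\}$; for $0<\alpha<\omega_1$ even, $\mathcal B_\alpha=\mathcal B_{<\alpha}\cup\{\bigcup_nf_n^\frown B_n: B_n\in\mathcal B_{<\alpha},(f_n)$ forking$\}$, where $\mathcal B_{<\alpha}=\bigcup_{\beta<\alpha}\mathcal B_\beta$; $\mathcal B_{\omega_1}=\bigcup_{\alpha<\omega_1}\mathcal B_\alpha$. A countable set $A\subset\omega^\omega$ is a broom-extension of $B\in\mathcal B_{\omega_1}$ if $A=\{s^\frown f^s_n{}^\frown\nu^s_n: s\in B,n\in\omega\}$ for some forking sequences $(f^s_n)_n$, $s\in B$, and some $\nu^s_n\in\omega^\omega$. $\mathcal A_\alpha$ is the set of broom-extensions of elements of $\mathcal B_\alpha$. *)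

theory Defs
  imports Main "HOL-Library.Sublist" "HOL-Library.Countable_Set"
begin

text \<open>W is a fixed well-order of order type omega_1 (the cardinal successor of
  aleph_0, i.e. the initial ordinal omega_1); its field consists of nat-sets
  representing the countable ordinals.  An ordinal alpha \<le> omega_1 is an element
  of type nat set option: Some a (a in Field W) is a countable ordinal, None is omega_1.\<close>

definition W :: "nat set rel" where
  "W = cardSuc (card_of (UNIV :: nat set))"

definition ords_le_omega1 :: "nat set option set" where
  "ords_le_omega1 = Some ` Field W \<union> {None}"

definition lt_set :: "nat set \<Rightarrow> nat set set" where
  "lt_set a = {c. (c, a) \<in> W \<and> c \<noteq> a}"

definition le_set :: "nat set \<Rightarrow> nat set set" where
  "le_set a = {c. (c, a) \<in> W}"

text \<open>a = 0 iff lt_set a = {}; a = c + 1 iff lt_set a = le_set c (c in Field W)\<close>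
definition is_succ_of :: "nat set \<Rightarrow> nat set \<Rightarrow> bool" where
  "is_succ_of a c \<longleftrightarrow> c \<in> Field W \<and> lt_set a = le_set c"

definition pred_ord :: "nat set \<Rightarrow> nat set" where
  "pred_ord a = (THE c. is_succ_of a c)"

text \<open>the limit part lambda (limit or 0) of a = lambda + k: the least b \<le> a such
  that the interval [b, a] is finite\<close>
definition lim_part :: "nat set \<Rightarrow> nat set" where
  "lim_part a = (THE b. (b, a) \<in> W \<and> finite (le_set a - lt_set b) \<and>
      (\<forall>c. (c, a) \<in> W \<and> finite (le_set a - lt_set c) \<longrightarrow> (b, c) \<in> W))"

text \<open>the finite part k = 2n + i of a = lambda + k\<close>
definition fin_part :: "nat set \<Rightarrow> nat" where
  "fin_part a = card (lt_set a - lt_set (lim_part a))"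

text \<open>alpha' for countable alpha = lambda + 2n + i: lambda + n\<close>
definition prime_ord :: "nat set \<Rightarrow> nat set" where
  "prime_ord a = (THE c. (lim_part a, c) \<in> W \<and> (c, a) \<in> W \<and>
      card (lt_set c - lt_set (lim_part a)) = fin_part a div 2)"

definition primeO :: "nat set option \<Rightarrow> nat set option" where
  "primeO x = (case x of None \<Rightarrow> None | Some a \<Rightarrow> Some (prime_ord a))"

definition evenO :: "nat set option \<Rightarrow> bool" where
  "evenO x = (case x of None \<Rightarrow> True | Some a \<Rightarrow> even (fin_part a))"

definition clTr :: "nat list set \<Rightarrow> nat list set" where
  "clTr S = {take k s | s k. s \<in> S}"

definition clTr_inf :: "(nat \<Rightarrow> nat) set \<Rightarrow> nat list set" where
  "clTr_inf S = {map f [0..<k] | f k. f \<in> S}"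

definition Diie_tree :: "nat list set \<Rightarrow> nat list set" where
  "Diie_tree T = {t \<in> T. \<exists>E \<subseteq> T. infinite E \<and> (\<forall>e \<in> E. prefix t e) \<and>
      (\<forall>x \<in> E. \<forall>y \<in> E. x \<noteq> y \<longrightarrow> \<not> prefix x y \<and> \<not> prefix y x) \<and> inj_on length E}"

definition Diie :: "nat list set \<Rightarrow> nat list set" where
  "Diie S = Diie_tree (clTr S)"

definition Diie_inf :: "(nat \<Rightarrow> nat) set \<Rightarrow> nat list set" where
  "Diie_inf A = Diie_tree (clTr_inf A)"

definition Diter :: "nat list set \<Rightarrow> nat set \<Rightarrow> nat list set" where
  "Diter S = wfrec (W - Id) (\<lambda>F a.
      if lt_set a = {} then clTr S
      else if (\<exists>c. is_succ_of a c) then Diie (F (pred_ord a))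
      else \<Inter> (F ` lt_set a))"

definition DiterO :: "nat list set \<Rightarrow> nat set option \<Rightarrow> nat list set" where
  "DiterO S x = (case x of None \<Rightarrow> \<Inter> (Diter S ` Field W) | Some a \<Rightarrow> Diter S a)"

definition hcat :: "nat list \<Rightarrow> nat list set \<Rightarrow> nat list set" where
  "hcat h B = {h @ s | s. s \<in> B}"

definition forking :: "(nat \<Rightarrow> nat list) \<Rightarrow> bool" where
  "forking f \<longleftrightarrow> (\<forall>n. f n \<noteq> []) \<and> (\<forall>n m. n \<noteq> m \<longrightarrow> f n ! 0 \<noteq> f m ! 0)"

definition Brooms :: "nat set \<Rightarrow> nat list set set" where
  "Brooms = wfrec (W - Id) (\<lambda>F a.
      (\<Union> (F ` lt_set a)) \<union>
      (if lt_set a = {} then {{[]}}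
       else if odd (fin_part a) then {hcat h B | h B. B \<in> F (pred_ord a)}
       else {(\<Union>n. hcat (f n) (Bs n)) | f Bs. forking f \<and> (\<forall>n. Bs n \<in> \<Union> (F ` lt_set a))}))"

definition BroomsO :: "nat set option \<Rightarrow> nat list set set" where
  "BroomsO x = (case x of None \<Rightarrow> \<Union> (Brooms ` Field W) | Some a \<Rightarrow> Brooms a)"

definition conc :: "nat list \<Rightarrow> (nat \<Rightarrow> nat) \<Rightarrow> (nat \<Rightarrow> nat)" where
  "conc s \<nu> = (\<lambda>k. if k < length s then s ! k else \<nu> (k - length s))"

definition broom_ext :: "(nat \<Rightarrow> nat) set \<Rightarrow> nat list set \<Rightarrow> bool" where
  "broom_ext A B \<longleftrightarrow> countable A \<and>
     (\<exists>(f :: nat list \<Rightarrow> nat \<Rightarrow> nat list) (\<nu> :: nat list \<Rightarrow> nat \<Rightarrow> (nat \<Rightarrow> nat)).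
        (\<forall>s \<in> B. forking (f s)) \<and>
        A = {conc (s @ f s n) (\<nu> s n) | s n. s \<in> B})"

definition BroomExtO :: "nat set option \<Rightarrow> (nat \<Rightarrow> nat) set set" where
  "BroomExtO x = {A. \<exists>B \<in> BroomsO x. broom_ext A B}"

end

theory Submission
  imports Defs
begin

lemma WO: "Well_order W"
  unfolding W_def by (simp add: cardSuc_Well_order card_of_Card_order)
lemma infF: "infinite (Field W)"
  unfolding W_def using cardSuc_finite[OF card_of_Card_order, of "UNIV::nat set"]
  by (simp add: Field_card_of)

lemma Wrefl: "a \<in> Field W \<Longrightarrow> (a,a) \<in> W"
  using WO unfolding well_order_on_def linear_order_on_def partial_order_on_def preorder_on_def refl_on_def
  by blast
lemma Wtrans: "(a,b)\<in>W \<Longrightarrow> (b,c)\<in>W \<Longrightarrow> (a,c)\<in>W"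
  using WO unfolding well_order_on_def linear_order_on_def partial_order_on_def preorder_on_def trans_def
  by blast
lemma Wantisym: "(a,b)\<in>W \<Longrightarrow> (b,a)\<in>W \<Longrightarrow> a = b"
  using WO unfolding well_order_on_def linear_order_on_def partial_order_on_def antisym_def
  by blast
lemma Wtotal: "a \<in> Field W \<Longrightarrow> b \<in> Field W \<Longrightarrow> (a,b)\<in>W \<or> (b,a)\<in>W"
  using WO Wrefl unfolding well_order_on_def linear_order_on_def total_on_def
  by metis
lemma Wwf: "wf (W - Id)"
  using WO unfolding well_order_on_def by blast
lemma WF1: "(a,b)\<in>W \<Longrightarrow> a \<in> Field W" by (rule FieldI1)
lemma WF2: "(a,b)\<in>W \<Longrightarrow> b \<in> Field W" by (rule FieldI2)

lemma Wmin: assumes "X \<subseteq> Field W" "x \<in> X" shows "\<exists>m\<in>X. \<forall>y\<in>X. (m,y)\<in>W"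
proof -
  obtain m where m: "m \<in> X" "\<forall>y. (y,m) \<in> W - Id \<longrightarrow> y \<notin> X"
    using Wwf assms(2) unfolding wf_eq_minimal by metis
  show ?thesis
  proof (intro bexI[OF _ m(1)] ballI)
    fix y assume "y \<in> X"
    then show "(m,y) \<in> W" using m assms(1) Wtotal[of m y] Wrefl by auto
  qed
qed

lemma Wnomax: "a \<in> Field W \<Longrightarrow> \<exists>b\<in>Field W. (a,b)\<in>W \<and> a\<noteq>b"
  using infinite_Card_order_limit[of W a] infF unfolding W_def
  by (metis W_def cardSuc_Card_order card_of_Card_order)

lemma lt_set_iff: "c \<in> lt_set a \<longleftrightarrow> (c,a) \<in> W - Id"
  unfolding lt_set_def by auto

definition icc where "icc b a = {x. (b,x)\<in>W \<and> (x,a)\<in>W}"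
definition ico where "ico b a = {x. (b,x)\<in>W \<and> (x,a)\<in>W \<and> x \<noteq> a}"

lemma icc_eq: "b \<in> Field W \<Longrightarrow> le_set a - lt_set b = icc b a"
  unfolding icc_def le_set_def lt_set_def using Wtotal Wantisym WF1 by blast
lemma ico_eq: "b \<in> Field W \<Longrightarrow> lt_set a - lt_set b = ico b a"
  unfolding ico_def le_set_def lt_set_def using Wtotal Wantisym WF1 by blast

lemma lim_prop: assumes a: "a \<in> Field W"
  shows "(lim_part a, a) \<in> W \<and> finite (icc (lim_part a) a) \<and>
     (\<forall>c. (c,a)\<in>W \<and> finite (icc c a) \<longrightarrow> (lim_part a, c) \<in> W)"
proof -
  let ?L = "{b. (b,a)\<in>W \<and> finite (icc b a)}"
  have "icc a a = {a}" unfolding icc_def using Wantisym Wrefl[OF a] by auto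
  then have "a \<in> ?L" using Wrefl[OF a] by auto
  then obtain m where m: "m \<in> ?L" "\<forall>y\<in>?L. (m,y)\<in>W" using Wmin[of ?L a] WF1 by blast
  let ?P = "\<lambda>b. (b, a) \<in> W \<and> finite (le_set a - lt_set b) \<and>
      (\<forall>c. (c, a) \<in> W \<and> finite (le_set a - lt_set c) \<longrightarrow> (b, c) \<in> W)"
  have P: "?P b \<longleftrightarrow> b \<in> ?L \<and> (\<forall>y\<in>?L. (b,y)\<in>W)" for b
    using icc_eq WF1 by auto
  have "?P m" using P m by blast
  moreover have "?P b \<Longrightarrow> b = m" for b using P m Wantisym by blast
  ultimately have "?P (lim_part a)" unfolding lim_part_def by (rule theI)
  then show ?thesis using P by blast
qed

definition rk where "rk l x = card (ico l x)"

lemma rk_strict: assumes "(l,x)\<in>W" "(x,y)\<in>W" "x\<noteq>y" "finite (ico l y)"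
  shows "rk l x < rk l y"
proof -
  have "ico l x \<subset> ico l y"
  proof
    show "ico l x \<subseteq> ico l y" unfolding ico_def using assms Wtrans Wantisym by blast
    show "ico l x \<noteq> ico l y" using assms unfolding ico_def by auto
  qed
  then show ?thesis unfolding rk_def using assms(4) psubset_card_mono by blast
qed

lemma ico_sub: "(y,a)\<in>W \<Longrightarrow> ico l y \<subseteq> icc l a"
  unfolding ico_def icc_def using Wtrans by blast

lemma rk_le_iff: assumes "finite (icc l a)" "x \<in> icc l a" "y \<in> icc l a"
  shows "(x,y)\<in>W \<longleftrightarrow> rk l x \<le> rk l y"
proof
  assume xy: "(x,y)\<in>W"
  show "rk l x \<le> rk l y"
  proof (cases "x = y")
    case False
    have "finite (ico l y)" using assms ico_sub[of y a l] finite_subset unfolding icc_def by blast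
    then show ?thesis using rk_strict[of l x y] xy False assms unfolding icc_def by fastforce
  qed simp
next
  assume le: "rk l x \<le> rk l y"
  show "(x,y)\<in>W"
  proof (rule ccontr)
    assume nxy: "(x,y)\<notin>W"
    then have "(y,x)\<in>W" "y \<noteq> x" using Wtotal[of x y] WF1 WF2 assms Wrefl unfolding icc_def by blast+
    moreover have "finite (ico l x)" using assms ico_sub[of x a l] finite_subset unfolding icc_def by blast
    ultimately have "rk l y < rk l x" using rk_strict[of l y x] assms unfolding icc_def by blast
    then show False using le by simp
  qed
qed

lemma rk_inj: assumes "finite (icc l a)" "x \<in> icc l a" "y \<in> icc l a" "rk l x = rk l y"
  shows "x = y"
  using rk_le_iff[OF assms(1,2,3)] rk_le_iff[OF assms(1,3,2)] assms(4) Wantisym by auto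

lemma rk_surj: assumes "finite (icc l a)" "(l,a)\<in>W" "j \<le> rk l a"
  shows "\<exists>x\<in>icc l a. rk l x = j"
proof -
  have a: "a \<in> icc l a" using assms(2) Wrefl WF2 unfolding icc_def by blast
  have ins: "icc l a = insert a (ico l a)" "a \<notin> ico l a" unfolding icc_def ico_def
    using a unfolding icc_def by auto
  have fin: "finite (ico l a)" using assms(1) ins by simp
  have inj: "inj_on (rk l) (icc l a)" using rk_inj assms(1) unfolding inj_on_def by blast
  have sub: "rk l ` icc l a \<subseteq> {..rk l a}"
    using rk_le_iff[OF assms(1) _ a] unfolding icc_def by auto
  have "card (rk l ` icc l a) = card (icc l a)" using card_image inj by blast
  also have "\<dots> = rk l a + 1" using ins fin unfolding rk_def by simp
  finally have "rk l ` icc l a = {..rk l a}" using card_subset_eq[OF _ sub] by simp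
  then show ?thesis using assms(3) by (metis atMost_iff imageE)
qed

lemma fin_part_rk: "a \<in> Field W \<Longrightarrow> fin_part a = rk (lim_part a) a"
  unfolding fin_part_def rk_def using ico_eq lim_prop WF1 by metis

lemma prime_prop: assumes a: "a \<in> Field W"
  shows "prime_ord a \<in> icc (lim_part a) a \<and> rk (lim_part a) (prime_ord a) = fin_part a div 2"
proof -
  let ?l = "lim_part a"
  have L: "(?l, a) \<in> W" "finite (icc ?l a)" using lim_prop[OF a] by auto
  have lF: "?l \<in> Field W" using L WF1 by blast
  let ?P = "\<lambda>c. (?l, c) \<in> W \<and> (c, a) \<in> W \<and> card (lt_set c - lt_set ?l) = fin_part a div 2"
  have P: "?P c \<longleftrightarrow> c \<in> icc ?l a \<and> rk ?l c = fin_part a div 2" for c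
    using ico_eq[OF lF] unfolding rk_def icc_def by auto
  obtain x where x: "x \<in> icc ?l a" "rk ?l x = fin_part a div 2"
    using rk_surj[OF L(2) L(1), of "fin_part a div 2"] fin_part_rk[OF a] by auto
  have "?P x" using P x by blast
  moreover have "?P y \<Longrightarrow> y = x" for y using P x rk_inj[OF L(2)] by metis
  ultimately have "?P (prime_ord a)" unfolding prime_ord_def by (rule theI)
  then show ?thesis using P by blast
qed

lemma lim_eq: assumes a: "a \<in> Field W" and c: "(lim_part a, c)\<in>W" "(c,a)\<in>W"
  shows "lim_part c = lim_part a"
proof -
  have cF: "c \<in> Field W" using c WF2 by blast
  have La: "(lim_part a, a) \<in> W" "finite (icc (lim_part a) a)" 
     "\<And>d. (d,a)\<in>W \<Longrightarrow> finite (icc d a) \<Longrightarrow> (lim_part a, d) \<in> W" using lim_prop[OF a] by auto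
  have Lc: "(lim_part c, c) \<in> W" "finite (icc (lim_part c) c)" 
     "\<And>d. (d,c)\<in>W \<Longrightarrow> finite (icc d c) \<Longrightarrow> (lim_part c, d) \<in> W" using lim_prop[OF cF] by auto
  have "icc (lim_part a) c \<subseteq> icc (lim_part a) a" unfolding icc_def using c Wtrans by blast
  then have 1: "(lim_part c, lim_part a) \<in> W" using Lc(3)[OF c(1)] La(2) finite_subset by blast
  have "icc (lim_part c) a \<subseteq> icc (lim_part c) c \<union> icc (lim_part a) a"
    unfolding icc_def using Wtotal[of c] cF WF2 c Wtrans by blast
  then have "finite (icc (lim_part c) a)" using Lc(2) La(2) finite_subset by blast
  then have 2: "(lim_part a, lim_part c) \<in> W" using La(3) Lc(1) c(2) Wtrans by blast
  show ?thesis using 1 2 Wantisym by blast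
qed

lemma prime_le: "a \<in> Field W \<Longrightarrow> (lim_part a, prime_ord a) \<in> W \<and> (prime_ord a, a) \<in> W"
  using prime_prop unfolding icc_def by blast

lemma prime_mono: assumes c: "(c,a)\<in>W"
  shows "(prime_ord c, prime_ord a) \<in> W \<and> (c \<noteq> a \<and> even (fin_part a) \<longrightarrow> prime_ord c \<noteq> prime_ord a)"
proof -
  have a: "a \<in> Field W" and cF: "c \<in> Field W" using c WF1 WF2 by blast+
  let ?l = "lim_part a"
  have La: "(?l, a) \<in> W" "finite (icc ?l a)" using lim_prop[OF a] by auto
  have pa: "prime_ord a \<in> icc ?l a" "rk ?l (prime_ord a) = fin_part a div 2" using prime_prop[OF a] by auto
  show ?thesis
  proof (cases "(?l, c) \<in> W")
    case True
    have lc: "lim_part c = ?l" using lim_eq[OF a True c] .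
    have pc: "prime_ord c \<in> icc ?l c" "rk ?l (prime_ord c) = fin_part c div 2" using prime_prop[OF cF] lc by auto
    have pc2: "prime_ord c \<in> icc ?l a" using pc(1) c Wtrans unfolding icc_def by blast
    have cia: "c \<in> icc ?l a" "a \<in> icc ?l a" using True c La Wrefl[OF a] unfolding icc_def by auto
    have fc: "fin_part c = rk ?l c" "fin_part a = rk ?l a" using fin_part_rk[OF cF] fin_part_rk[OF a] lc by auto
    have "rk ?l c \<le> rk ?l a" using rk_le_iff[OF La(2) cia] c by blast
    then have "(prime_ord c, prime_ord a) \<in> W" using rk_le_iff[OF La(2) pc2 pa(1)] pc(2) pa(2) fc
      by (simp add: div_le_mono)
    moreover have "prime_ord c \<noteq> prime_ord a" if "c \<noteq> a" "even (fin_part a)"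
    proof -
      have "rk ?l c < rk ?l a"
        using rk_strict[of ?l c a] True c that(1) La(2) ico_sub[of a a ?l] Wrefl[OF a] finite_subset by blast
      then have "fin_part c div 2 < fin_part a div 2" using fc that(2) by presburger
      then show ?thesis using pc(2) pa(2) by auto
    qed
    ultimately show ?thesis by blast
  next
    case False
    have lF: "?l \<in> Field W" using La WF1 by blast
    have cl: "(c, ?l) \<in> W" "c \<noteq> ?l" using False Wtotal[OF cF lF] Wrefl[OF lF] by auto
    have pcc: "(prime_ord c, c) \<in> W" using prime_le[OF cF] by blast
    have lp: "(?l, prime_ord a) \<in> W" using pa(1) unfolding icc_def by blast
    have "(prime_ord c, prime_ord a) \<in> W" using pcc cl(1) lp Wtrans by blast
    moreover have "prime_ord c \<noteq> prime_ord a"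
    proof
      assume "prime_ord c = prime_ord a"
      then have "(?l, c) \<in> W" using lp pcc Wtrans by metis
      then show False using False by blast
    qed
    ultimately show ?thesis by blast
  qed
qed

lemma pred_eq: assumes "is_succ_of a c" shows "pred_ord a = c" "c \<in> lt_set a"
proof -
  have c: "c \<in> Field W" "lt_set a = le_set c" using assms unfolding is_succ_of_def by auto
  have "c \<in> le_set c" using c(1) Wrefl unfolding le_set_def by blast
  then show "c \<in> lt_set a" using c(2) by simp
  have "d = c" if "is_succ_of a d" for d
  proof -
    have d: "d \<in> Field W" "le_set d = le_set c" using that c(2) unfolding is_succ_of_def by (simp_all only:) 
    have "d \<in> le_set d" "c \<in> le_set c" using d c Wrefl unfolding le_set_def by auto
    then have "(d,c)\<in>W" "(c,d)\<in>W" using d unfolding le_set_def by auto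
    then show ?thesis using Wantisym by blast
  qed
  note uniq = this
  show "pred_ord a = c" unfolding pred_ord_def by (rule the_equality[where P="is_succ_of a", OF assms uniq])
qed

lemma succ_ex: assumes "(p,q)\<in>W" "p \<noteq> q"
  shows "\<exists>d. is_succ_of d p \<and> (d,q) \<in> W"
proof -
  let ?X = "{x \<in> Field W. (p,x)\<in>W \<and> p \<noteq> x}"
  have "q \<in> ?X" using assms WF2 by blast
  then obtain d where d: "d \<in> ?X" "\<forall>y\<in>?X. (d,y)\<in>W" using Wmin[of ?X q] by blast
  have pF: "p \<in> Field W" using assms WF1 by blast
  have "lt_set d = le_set p"
  proof (intro set_eqI iffI)
    fix x assume "x \<in> lt_set d"
    then have x: "(x,d)\<in>W" "x\<noteq>d" unfolding lt_set_def by auto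
    have xF: "x \<in> Field W" using x WF1 by blast
    show "x \<in> le_set p"
    proof (rule ccontr)
      assume "x \<notin> le_set p"
      then have "(p,x)\<in>W" "p\<noteq>x" using Wtotal[OF xF pF] Wrefl[OF pF] unfolding le_set_def by auto
      then have "(d,x)\<in>W" using d xF by blast
      then show False using x Wantisym by blast
    qed
  next
    fix x assume "x \<in> le_set p"
    then have xp: "(x,p)\<in>W" unfolding le_set_def by auto
    have pd: "(p,d)\<in>W" "p \<noteq> d" using d(1) by auto
    have "(x,d)\<in>W" using Wtrans[OF xp pd(1)] .
    moreover have "x \<noteq> d" using xp pd Wantisym by blast
    ultimately show "x \<in> lt_set d" unfolding lt_set_def by blast
  qed
  then show ?thesis using pF d(1) \<open>q \<in> ?X\<close> d(2) unfolding is_succ_of_def by blast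
qed

lemma zero_lemma: assumes a: "a \<in> Field W" "lt_set a = {}"
  shows "prime_ord a = a" "fin_part a = 0"
proof -
  have "lim_part a = a" using lim_prop[OF a(1)] a(2) unfolding lt_set_def by blast
  then have "icc (lim_part a) a = {a}" unfolding icc_def using Wantisym Wrefl[OF a(1)] by auto
  then show "prime_ord a = a" using prime_prop[OF a(1)] by auto
  have "ico a a = {}" unfolding ico_def using Wantisym by blast
  then show "fin_part a = 0" using fin_part_rk[OF a(1)] \<open>lim_part a = a\<close> unfolding rk_def by simp
qed

lemma odd_lemma: assumes a: "a \<in> Field W" and od: "odd (fin_part a)"
  shows "\<exists>c. is_succ_of a c" "pred_ord a \<in> lt_set a" "even (fin_part (pred_ord a))"
        "prime_ord (pred_ord a) = prime_ord a"
proof -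
  let ?l = "lim_part a" and ?k = "fin_part a"
  have La: "(?l, a) \<in> W" "finite (icc ?l a)" using lim_prop[OF a] by auto
  have k: "?k = rk ?l a" using fin_part_rk[OF a] .
  obtain c where c: "c \<in> icc ?l a" "rk ?l c = ?k - 1" using rk_surj[OF La(2) La(1), of "?k - 1"] k by auto
  have aia: "a \<in> icc ?l a" using La Wrefl[OF a] unfolding icc_def by auto
  have k1: "?k \<ge> 1" using od by (cases ?k) auto
  have cne: "c \<noteq> a" using c k k1 by auto
  have cF: "c \<in> Field W" using c WF2 unfolding icc_def by blast
  have ca: "(c,a) \<in> W" using c unfolding icc_def by blast
  have "lt_set a = le_set c"
  proof (intro set_eqI iffI)
    fix x assume "x \<in> lt_set a"
    then have x: "(x,a)\<in>W" "x\<noteq>a" unfolding lt_set_def by auto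
    have xF: "x \<in> Field W" using x WF1 by blast
    show "x \<in> le_set c"
    proof (cases "(?l, x) \<in> W")
      case True
      then have xi: "x \<in> icc ?l a" using x unfolding icc_def by blast
      have "rk ?l x < rk ?l a" using rk_strict[of ?l x a] True x La(2) ico_sub[of a a ?l] Wrefl[OF a] finite_subset by blast
      then have "rk ?l x \<le> rk ?l c" using c k by simp
      then show ?thesis using rk_le_iff[OF La(2) xi c(1)] unfolding le_set_def by blast
    next
      case False
      then have "(x, ?l) \<in> W" using Wtotal[OF xF] La WF1 by blast
      then show ?thesis using c Wtrans unfolding le_set_def icc_def by blast
    qed
  next
    fix x assume "x \<in> le_set c"
    then have "(x,c)\<in>W" unfolding le_set_def by auto
    then have xc: "(x,c)\<in>W" .
    have "(x,a)\<in>W" using Wtrans[OF xc ca] .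
    moreover have "x \<noteq> a" using xc ca cne Wantisym by blast
    ultimately show "x \<in> lt_set a" unfolding lt_set_def by blast
  qed
  then have sc: "is_succ_of a c" unfolding is_succ_of_def using cF by blast
  then show "\<exists>c. is_succ_of a c" by blast
  have pc: "pred_ord a = c" using pred_eq[OF sc] by blast
  then show "pred_ord a \<in> lt_set a" using pred_eq[OF sc] by simp
  have lc: "lim_part c = ?l" using lim_eq[OF a _ ca] c unfolding icc_def by blast
  have fc: "fin_part c = ?k - 1" using fin_part_rk[OF cF] lc c by simp
  then show "even (fin_part (pred_ord a))" using pc od by (simp add: pc)
  have pcc: "prime_ord c \<in> icc ?l c" "rk ?l (prime_ord c) = (?k - 1) div 2" using prime_prop[OF cF] lc fc by auto
  have pc2: "prime_ord c \<in> icc ?l a" using pcc(1) ca Wtrans unfolding icc_def by blast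
  have pa: "prime_ord a \<in> icc ?l a" "rk ?l (prime_ord a) = ?k div 2" using prime_prop[OF a] by auto
  have "(?k - 1) div 2 = ?k div 2" using od by presburger
  then have "prime_ord c = prime_ord a" using rk_inj[OF La(2) pc2 pa(1)] pcc(2) pa(2) by simp
  then show "prime_ord (pred_ord a) = prime_ord a" using pc by simp
qed


lemma Diter_eq: "Diter S a = (if lt_set a = {} then clTr S
      else if (\<exists>c. is_succ_of a c) then Diie (Diter S (pred_ord a))
      else \<Inter> (Diter S ` lt_set a))"
proof -
  let ?F = "\<lambda>F a. if lt_set a = {} then clTr S
      else if (\<exists>c. is_succ_of a c) then Diie (F (pred_ord a))
      else \<Inter> (F ` lt_set a)"
  have adm: "adm_wf (W - Id) ?F"
    unfolding adm_wf_def
  proof (intro allI impI)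
    fix f g :: "nat set \<Rightarrow> nat list set" and x
    assume H: "\<forall>z. (z, x) \<in> W - Id \<longrightarrow> f z = g z"
    then have H': "\<And>z. z \<in> lt_set x \<Longrightarrow> f z = g z" using lt_set_iff by blast
    have 1: "f ` lt_set x = g ` lt_set x" using H' by auto
    have 2: "f (pred_ord x) = g (pred_ord x)" if "\<exists>c. is_succ_of x c"
      using that pred_eq H' by metis
    show "?F f x = ?F g x" using 1 2 by auto
  qed
  have "Diter S = ?F (Diter S)" unfolding Diter_def by (rule wfrec_fixpoint[OF Wwf adm])
  then show ?thesis by (rule fun_cong)
qed

lemma Brooms_eq: "Brooms a = (\<Union> (Brooms ` lt_set a)) \<union>
      (if lt_set a = {} then {{[]}}
       else if odd (fin_part a) then {hcat h B | h B. B \<in> Brooms (pred_ord a)}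
       else {(\<Union>n. hcat (f n) (Bs n)) | f Bs. forking f \<and> (\<forall>n. Bs n \<in> \<Union> (Brooms ` lt_set a))})"
proof -
  let ?F = "\<lambda>F a. (\<Union> (F ` lt_set a)) \<union>
      (if lt_set a = {} then {{[]}}
       else if odd (fin_part a) then {hcat h B | h B. B \<in> F (pred_ord a)}
       else {(\<Union>n. hcat (f n) (Bs n)) | f Bs. forking f \<and> (\<forall>n. Bs n \<in> \<Union> (F ` lt_set a))})"
  have adm: "adm_wf (W - Id) ?F"
    unfolding adm_wf_def
  proof (intro allI impI)
    fix f g :: "nat set \<Rightarrow> nat list set set" and x
    assume H: "\<forall>z. (z, x) \<in> W - Id \<longrightarrow> f z = g z"
    then have H': "\<And>z. z \<in> lt_set x \<Longrightarrow> f z = g z" using lt_set_iff by blast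
    have 1: "f ` lt_set x = g ` lt_set x" using H' by auto
    have 2: "f (pred_ord x) = g (pred_ord x)" if ne: "lt_set x \<noteq> {}" and od: "odd (fin_part x)"
    proof -
      obtain z where "z \<in> lt_set x" using ne by blast
      then have "x \<in> Field W" unfolding lt_set_def using WF2 by blast
      then show ?thesis using odd_lemma(2) od H' by blast
    qed
    show "?F f x = ?F g x" using 1 2 by auto
  qed
  have "Brooms = ?F Brooms" unfolding Brooms_def by (rule wfrec_fixpoint[OF Wwf adm])
  then show ?thesis by (rule fun_cong)
qed

definition closed :: "nat list set \<Rightarrow> bool" where
  "closed T \<longleftrightarrow> (\<forall>t\<in>T. \<forall>k. take k t \<in> T)"

lemma clTr_closed: "closed T \<Longrightarrow> clTr T = T"
  unfolding closed_def clTr_def by (auto, metis take_all_iff order_refl)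

lemma sub_clTr: "S \<subseteq> clTr S"
  unfolding clTr_def by (auto, metis take_all_iff order_refl)

lemma closed_clTr: "closed (clTr S)"
  unfolding closed_def clTr_def by (auto, metis take_take)

lemma clTr_mono: "S \<subseteq> T \<Longrightarrow> clTr S \<subseteq> clTr T"
  unfolding clTr_def by blast

lemma Diie_tree_sub: "Diie_tree T \<subseteq> T"
  unfolding Diie_tree_def by blast

lemma Diie_tree_mono: assumes "S \<subseteq> T" shows "Diie_tree S \<subseteq> Diie_tree T"
proof
  fix t assume "t \<in> Diie_tree S"
  then obtain E where t: "t \<in> S" "E \<subseteq> S" "infinite E" "\<forall>e \<in> E. prefix t e"
      "\<forall>x \<in> E. \<forall>y \<in> E. x \<noteq> y \<longrightarrow> \<not> prefix x y \<and> \<not> prefix y x" "inj_on length E"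
    unfolding Diie_tree_def by blast
  have "t \<in> T" "E \<subseteq> T" using t assms by auto
  then show "t \<in> Diie_tree T" unfolding Diie_tree_def using t by blast
qed

lemma Diie_tree_finite: assumes "finite T" shows "Diie_tree T = {}"
proof -
  have "t \<notin> Diie_tree T" for t
  proof
    assume "t \<in> Diie_tree T"
    then obtain E where "E \<subseteq> T" "infinite E" unfolding Diie_tree_def by blast
    then show False using assms finite_subset by blast
  qed
  then show ?thesis by blast
qed

lemma closed_Diie_tree: assumes "closed T" shows "closed (Diie_tree T)"
  unfolding closed_def
proof (intro ballI allI)
  fix t k assume "t \<in> Diie_tree T"
  then obtain E where t: "t \<in> T" "E \<subseteq> T" "infinite E" "\<forall>e \<in> E. prefix t e"
      "\<forall>x \<in> E. \<forall>y \<in> E. x \<noteq> y \<longrightarrow> \<not> prefix x y \<and> \<not> prefix y x" "inj_on length E"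
    unfolding Diie_tree_def by blast
  have "\<forall>e \<in> E. prefix (take k t) e" using t(4) take_is_prefix prefix_order.trans by blast
  moreover have "take k t \<in> T" using assms t(1) unfolding closed_def by blast
  ultimately show "take k t \<in> Diie_tree T" unfolding Diie_tree_def using t by blast
qed

lemma closed_INT: "(\<And>i. i \<in> I \<Longrightarrow> closed (X i)) \<Longrightarrow> closed (\<Inter>i\<in>I. X i)"
  unfolding closed_def by blast

lemma closed_Un: "closed A \<Longrightarrow> closed B \<Longrightarrow> closed (A \<union> B)"
  unfolding closed_def by blast

lemma closed_UN: "(\<And>i. closed (X i)) \<Longrightarrow> closed (\<Union>i. X i)"
  unfolding closed_def by blast

lemma closed_Nil: "closed {[]}"
  unfolding closed_def by simp

lemma Diie_closed: "closed T \<Longrightarrow> Diie T = Diie_tree T"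
  unfolding Diie_def using clTr_closed by simp

lemma Diter_closed: "closed (Diter S a)"
proof (induction a rule: wf_induct[OF Wwf])
  case (1 a)
  show ?case
  proof (cases "lt_set a = {}")
    case True then show ?thesis using Diter_eq[of S a] closed_clTr by simp
  next
    case False
    show ?thesis
    proof (cases "\<exists>c. is_succ_of a c")
      case True
      then have "(pred_ord a, a) \<in> W - Id" using pred_eq lt_set_iff by blast
      then have "closed (Diter S (pred_ord a))" using 1 by blast
      then show ?thesis using Diter_eq[of S a] True False closed_Diie_tree Diie_closed by simp
    next
      case nT: False
      have "closed (\<Inter> (Diter S ` lt_set a))" using 1 lt_set_iff closed_INT[of "lt_set a" "Diter S"] by blast
      then show ?thesis using Diter_eq[of S a] nT False by simp
    qed
  qed
qed

lemma Diter_mono: "(c,a) \<in> W \<Longrightarrow> Diter S a \<subseteq> Diter S c"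
proof (induction a arbitrary: c rule: wf_induct[OF Wwf])
  case (1 a)
  show ?case
  proof (cases "c = a")
    case False
    then have ca: "c \<in> lt_set a" using 1(2) unfolding lt_set_def by blast
    then have ne: "lt_set a \<noteq> {}" by blast
    show ?thesis
    proof (cases "\<exists>p. is_succ_of a p")
      case True
      then obtain p where p: "is_succ_of a p" by blast
      have pa: "(p,a) \<in> W - Id" using pred_eq(2)[OF p] lt_set_iff by blast
      have "c \<in> le_set p" using ca p unfolding is_succ_of_def by simp
      then have "(c,p)\<in>W" unfolding le_set_def by simp
      then have "Diter S p \<subseteq> Diter S c" using 1(1) pa by blast
      moreover have "Diter S a = Diie (Diter S p)" using Diter_eq[of S a] ne True pred_eq(1)[OF p] by simp
      moreover have "Diie (Diter S p) \<subseteq> Diter S p" using Diie_closed[OF Diter_closed] Diie_tree_sub by simp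
      ultimately show ?thesis by blast
    next
      case False
      then show ?thesis using Diter_eq[of S a] ne ca by auto
    qed
  qed simp
qed

lemma Diter_zero: "lt_set a = {} \<Longrightarrow> Diter S a = clTr S"
  using Diter_eq[of S a] by simp
lemma Diter_succ: "is_succ_of a c \<Longrightarrow> Diter S a = Diie_tree (Diter S c)"
  using Diter_eq[of S a] pred_eq[of a c] Diie_closed[OF Diter_closed] by auto
lemma Diter_lim: "lt_set a \<noteq> {} \<Longrightarrow> \<not>(\<exists>c. is_succ_of a c) \<Longrightarrow> Diter S a = \<Inter> (Diter S ` lt_set a)"
  using Diter_eq[of S a] by auto

lemma Diter_finite_kill: assumes "(p,q)\<in>W" "p\<noteq>q" "finite (Diter S p)"
  shows "Diter S q = {}"
proof -
  obtain d where d: "is_succ_of d p" "(d,q)\<in>W" using succ_ex[OF assms(1,2)] by blast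
  have "Diter S d = {}" using Diter_succ[OF d(1)] Diie_tree_finite[OF assms(3)] by simp
  then show ?thesis using Diter_mono[OF d(2)] by blast
qed


lemma hcat_mono: "S \<subseteq> T \<Longrightarrow> hcat h S \<subseteq> hcat h T"
  unfolding hcat_def by blast

lemma hcat_in1: "s \<in> Y \<Longrightarrow> h @ s \<in> clTr (hcat h Y)"
  unfolding clTr_def hcat_def by (metis (mono_tags, lifting) mem_Collect_eq take_all_iff order_refl)

lemma hcat_in2: assumes "prefix t h" "Y \<noteq> {}" shows "t \<in> clTr (hcat h Y)"
proof -
  obtain y where y: "y \<in> Y" using assms by blast
  obtain zs where h: "h = t @ zs" using assms(1) prefix_def by blast
  have "t = take (length t) (h @ y)" using h by simp
  then show ?thesis unfolding clTr_def hcat_def using y by blast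
qed

lemma clTr_hcat_D: assumes "closed X" "t \<in> clTr (hcat h X)"
  shows "(\<exists>s\<in>X. t = h @ s) \<or> (X \<noteq> {} \<and> prefix t h)"
proof -
  obtain x k where t: "x \<in> X" "t = take k (h @ x)" using assms(2) unfolding clTr_def hcat_def by blast
  show ?thesis
  proof (cases "k \<le> length h")
    case True
    then have "t = take k h" using t by simp
    then show ?thesis using t(1) take_is_prefix by blast
  next
    case False
    then have "t = h @ take (k - length h) x" using t by simp
    moreover have "take (k - length h) x \<in> X" using assms(1) t(1) unfolding closed_def by blast
    ultimately show ?thesis by blast
  qed
qed

lemma clTr_hcat_long: assumes "closed X" "t \<in> clTr (hcat h X)" "length h \<le> length t"
  shows "\<exists>s\<in>X. t = h @ s"
proof -
  consider "\<exists>s\<in>X. t = h @ s" | "X \<noteq> {}" "prefix t h" using clTr_hcat_D[OF assms(1,2)] by blast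
  then show ?thesis
  proof cases
    case 2
    then have "t = h" using assms(3) prefix_length_le prefix_length_prefix
      by (metis prefix_order.eq_iff prefix_order.order_refl)
    moreover obtain x where "x \<in> X" using 2 by blast
    then have "take 0 x \<in> X" using assms(1) unfolding closed_def by blast
    ultimately show ?thesis by (metis append_Nil2 take_0)
  qed blast
qed

lemma shift_Diie:
  assumes E: "E \<subseteq> {h @ x | x. x \<in> X}" "infinite E" "\<forall>e\<in>E. prefix (h @ s) e"
    "\<forall>x \<in> E. \<forall>y \<in> E. x \<noteq> y \<longrightarrow> \<not> prefix x y \<and> \<not> prefix y x" "inj_on length E"
    and s: "s \<in> X"
  shows "s \<in> Diie_tree X"
proof -
  let ?d = "drop (length h)"
  have eh: "e = h @ ?d e" if "e \<in> E" for e using E(1) that by auto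
  have inj: "inj_on ?d E" unfolding inj_on_def using eh by metis
  let ?E = "?d ` E"
  have 1: "?E \<subseteq> X" using E(1) by auto
  have 2: "infinite ?E" using E(2) inj finite_image_iff by blast
  have 3: "\<forall>e \<in> ?E. prefix s e" using E(3) eh by (metis imageE same_prefix_prefix)
  have 4: "\<forall>x \<in> ?E. \<forall>y \<in> ?E. x \<noteq> y \<longrightarrow> \<not> prefix x y \<and> \<not> prefix y x"
  proof (intro ballI impI)
    fix x y assume "x \<in> ?E" "y \<in> ?E" "x \<noteq> y"
    then obtain ex ey where "ex \<in> E" "ey \<in> E" "x = ?d ex" "y = ?d ey" by blast
    moreover have "ex \<noteq> ey" using calculation \<open>x \<noteq> y\<close> by blast
    ultimately show "\<not> prefix x y \<and> \<not> prefix y x" using E(4) eh same_prefix_prefix by metis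
  qed
  have 5: "inj_on length ?E"
  proof (rule inj_onI)
    fix x y assume "x \<in> ?E" "y \<in> ?E" "length x = length y"
    then obtain ex ey where "ex \<in> E" "ey \<in> E" "x = ?d ex" "y = ?d ey" by blast
    moreover have "length ex = length ey" using calculation eh \<open>length x = length y\<close> by (metis length_append)
    ultimately show "x = y" using E(5) unfolding inj_on_def by metis
  qed
  show ?thesis unfolding Diie_tree_def using s 1 2 3 4 5 by blast
qed

lemma Diie_hcat: assumes X: "closed X"
  shows "Diie_tree (clTr (hcat h X)) \<subseteq> clTr (hcat h (Diie_tree X))"
proof
  fix t assume "t \<in> Diie_tree (clTr (hcat h X))"
  then obtain E where t: "t \<in> clTr (hcat h X)" "E \<subseteq> clTr (hcat h X)" "infinite E" "\<forall>e \<in> E. prefix t e"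
      "\<forall>x \<in> E. \<forall>y \<in> E. x \<noteq> y \<longrightarrow> \<not> prefix x y \<and> \<not> prefix y x" "inj_on length E"
    unfolding Diie_tree_def by blast
  show "t \<in> clTr (hcat h (Diie_tree X))"
  proof (cases "prefix h t")
    case True
    then obtain s where s: "s \<in> X" "t = h @ s" using clTr_hcat_long[OF X t(1)] prefix_length_le by blast
    have "E \<subseteq> {h @ x | x. x \<in> X}"
    proof
      fix e assume e: "e \<in> E"
      then have "length h \<le> length e" using t(4) s(2) prefix_length_le by fastforce
      then show "e \<in> {h @ x | x. x \<in> X}" using clTr_hcat_long[OF X] t(2) e by blast
    qed
    then have "s \<in> Diie_tree X" using shift_Diie[of E h X s] t s by blast
    then show ?thesis using s(2) hcat_in1 by blast
  next
    case False
    have "\<not> (\<exists>s\<in>X. t = h @ s)" using False prefixI by blast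
    then have pt: "prefix t h" using clTr_hcat_D[OF X t(1)] by blast
    let ?E2 = "{e \<in> E. length h < length e}"
    have fin1: "finite {e \<in> E. length e \<le> length h}"
    proof (rule inj_on_finite[of length _ "{..length h}"])
      show "inj_on length {e \<in> E. length e \<le> length h}" by (rule inj_on_subset[OF t(6)]) auto
      show "length ` {e \<in> E. length e \<le> length h} \<subseteq> {..length h}" by (rule image_subsetI) simp
      show "finite {..length h}" by simp
    qed
    have "E \<subseteq> ?E2 \<union> {e \<in> E. length e \<le> length h}" by auto
    then have inf2: "infinite ?E2" using t(3) fin1 by (meson finite_UnI finite_subset)
    have sub2: "?E2 \<subseteq> {h @ x | x. x \<in> X}"
    proof
      fix e assume e: "e \<in> ?E2"
      then have "e \<in> clTr (hcat h X)" "length h \<le> length e" using t(2) by auto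
      then obtain x where "x \<in> X" "e = h @ x" using clTr_hcat_long[OF X] by blast
      then show "e \<in> {h @ x | x. x \<in> X}" by blast
    qed
    then obtain e0 where "e0 \<in> ?E2" using inf2 by (metis (no_types, lifting) finite.emptyI ex_in_conv)
    then have "X \<noteq> {}" using sub2 by blast
    then have nil: "[] \<in> X" using X unfolding closed_def by (metis ex_in_conv take_0)
    have p1: "\<forall>e\<in>?E2. prefix (h @ []) e" using sub2 by auto
    have p2: "\<forall>x \<in> ?E2. \<forall>y \<in> ?E2. x \<noteq> y \<longrightarrow> \<not> prefix x y \<and> \<not> prefix y x" using t(5) by blast
    have p3: "inj_on length ?E2" by (rule inj_on_subset[OF t(6)]) auto
    have "[] \<in> Diie_tree X" by (rule shift_Diie[OF sub2 inf2 p1 p2 p3 nil])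
    then show ?thesis using hcat_in2[OF pt] by blast
  qed
qed

lemma INT_hcat: assumes I: "I \<noteq> {}" and X: "\<And>i. i \<in> I \<Longrightarrow> closed (X i)"
  shows "(\<Inter>i\<in>I. clTr (hcat h (X i))) \<subseteq> clTr (hcat h (\<Inter>i\<in>I. X i))"
proof
  fix t assume t: "t \<in> (\<Inter>i\<in>I. clTr (hcat h (X i)))"
  show "t \<in> clTr (hcat h (\<Inter>i\<in>I. X i))"
  proof (cases "prefix h t")
    case True
    have "\<exists>s\<in>X i. t = h @ s" if "i \<in> I" for i
      using clTr_hcat_long[OF X[OF that]] t that True prefix_length_le by blast
    then have "drop (length h) t \<in> X i" if "i \<in> I" for i using that by fastforce
    then have "drop (length h) t \<in> (\<Inter>i\<in>I. X i)" by blast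
    then have "h @ drop (length h) t \<in> clTr (hcat h (\<Inter>i\<in>I. X i))" by (rule hcat_in1)
    moreover have "t = h @ drop (length h) t" using True by (metis append_eq_conv_conj prefix_def)
    ultimately show ?thesis by simp
  next
    case False
    have nn: "\<not> (\<exists>s. t = h @ s)" using False prefixI by blast
    have "X i \<noteq> {} \<and> prefix t h" if "i \<in> I" for i using clTr_hcat_D[OF X[OF that]] t that nn by blast
    then have "[] \<in> X i" if "i \<in> I" for i using X[OF that] that unfolding closed_def by (metis ex_in_conv take_0)
    then have "(\<Inter>i\<in>I. X i) \<noteq> {}" by blast
    moreover have "prefix t h" using \<open>\<And>i. i \<in> I \<Longrightarrow> X i \<noteq> {} \<and> prefix t h\<close> I by blast
    ultimately show ?thesis using hcat_in2 by blast
  qed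
qed

lemma Diter_hcat: "Diter (hcat h B) a \<subseteq> clTr (hcat h (Diter B a))"
proof (induction a rule: wf_induct[OF Wwf])
  case (1 a)
  show ?case
  proof (cases "lt_set a = {}")
    case True
    then show ?thesis using Diter_zero[OF True] clTr_mono hcat_mono sub_clTr by metis
  next
    case ne: False
    show ?thesis
    proof (cases "\<exists>c. is_succ_of a c")
      case True
      then obtain c where c: "is_succ_of a c" by blast
      have "(c, a) \<in> W - Id" using pred_eq(2)[OF c] lt_set_iff by blast
      then have IH: "Diter (hcat h B) c \<subseteq> clTr (hcat h (Diter B c))" using 1 by blast
      have "Diter (hcat h B) a = Diie_tree (Diter (hcat h B) c)" using Diter_succ[OF c] .
      also have "\<dots> \<subseteq> Diie_tree (clTr (hcat h (Diter B c)))" using Diie_tree_mono[OF IH] .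
      also have "\<dots> \<subseteq> clTr (hcat h (Diie_tree (Diter B c)))" using Diie_hcat[OF Diter_closed] .
      also have "\<dots> = clTr (hcat h (Diter B a))" using Diter_succ[OF c] by simp
      finally show ?thesis .
    next
      case False
      have "Diter (hcat h B) a = (\<Inter>c\<in>lt_set a. Diter (hcat h B) c)" using Diter_lim[OF ne False] .
      also have "\<dots> \<subseteq> (\<Inter>c\<in>lt_set a. clTr (hcat h (Diter B c)))" using 1 lt_set_iff by blast
      also have "\<dots> \<subseteq> clTr (hcat h (\<Inter>c\<in>lt_set a. Diter B c))" using INT_hcat[OF ne] Diter_closed by blast
      also have "\<dots> = clTr (hcat h (Diter B a))" using Diter_lim[OF ne False] by simp
      finally show ?thesis .
    qed
  qed
qed


definition U :: "(nat \<Rightarrow> nat list) \<Rightarrow> (nat \<Rightarrow> nat list set) \<Rightarrow> nat list set" where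
  "U f X = insert [] (\<Union>n. clTr (hcat (f n) (X n)))"

lemma first_elt: assumes "f \<noteq> []" "u \<in> clTr (hcat f Y)" "u \<noteq> []" shows "u ! 0 = f ! 0"
proof -
  obtain y k where u: "u = take k (f @ y)" using assms(2) unfolding clTr_def hcat_def by blast
  then have "k > 0" using assms(3) by (cases k) auto
  then have "u ! 0 = (f @ y) ! 0" unfolding u by (rule nth_take)
  then show ?thesis using assms(1) by (simp add: nth_append)
qed

lemma closed_U: "closed (U f X)"
  unfolding U_def
proof -
  have "closed (\<Union>n. clTr (hcat (f n) (X n)))" by (rule closed_UN) (rule closed_clTr)
  then show "closed (insert [] (\<Union>n. clTr (hcat (f n) (X n))))"
    using closed_Un[OF closed_Nil] by (metis insert_is_Un)
qed

lemma U_branch: assumes f: "forking f" and t: "t \<in> U f X" "t \<noteq> []"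
  shows "\<exists>n. t \<in> clTr (hcat (f n) (X n)) \<and> t ! 0 = f n ! 0"
proof -
  obtain n where n: "t \<in> clTr (hcat (f n) (X n))" using t unfolding U_def by blast
  have "f n \<noteq> []" using f unfolding forking_def by blast
  then show ?thesis using first_elt n t(2) by blast
qed

lemma fork_inj: "forking f \<Longrightarrow> f n ! 0 = f m ! 0 \<Longrightarrow> n = m"
  unfolding forking_def by blast

lemma Diie_fork: assumes f: "forking f" and X: "\<And>n. closed (X n)"
  shows "Diie_tree (U f X) \<subseteq> U f (\<lambda>n. Diie_tree (X n))"
proof
  fix t assume "t \<in> Diie_tree (U f X)"
  then obtain E where t: "t \<in> U f X" "E \<subseteq> U f X" "infinite E" "\<forall>e \<in> E. prefix t e"
      "\<forall>x \<in> E. \<forall>y \<in> E. x \<noteq> y \<longrightarrow> \<not> prefix x y \<and> \<not> prefix y x" "inj_on length E"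
    unfolding Diie_tree_def by blast
  show "t \<in> U f (\<lambda>n. Diie_tree (X n))"
  proof (cases "t = []")
    case True then show ?thesis unfolding U_def by blast
  next
    case False
    obtain n where n: "t \<in> clTr (hcat (f n) (X n))" "t ! 0 = f n ! 0" using U_branch[OF f t(1) False] by blast
    have "E \<subseteq> clTr (hcat (f n) (X n))"
    proof
      fix e assume e: "e \<in> E"
      then have pe: "prefix t e" using t(4) by blast
      then have "e \<noteq> []" using False by auto
      then obtain m where m: "e \<in> clTr (hcat (f m) (X m))" "e ! 0 = f m ! 0"
        using U_branch[OF f] t(2) e by blast
      have "e ! 0 = t ! 0" using pe False by (metis length_greater_0_conv prefix_def nth_append)
      then have "m = n" using fork_inj[OF f] m(2) n(2) by simp
      then show "e \<in> clTr (hcat (f n) (X n))" using m by simp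
    qed
    then have "t \<in> Diie_tree (clTr (hcat (f n) (X n)))" unfolding Diie_tree_def using t n by blast
    then have "t \<in> clTr (hcat (f n) (Diie_tree (X n)))" using Diie_hcat[OF X] by blast
    then show ?thesis unfolding U_def by blast
  qed
qed

lemma INT_fork: assumes I: "I \<noteq> {}" and f: "forking f" and X: "\<And>i n. i \<in> I \<Longrightarrow> closed (X i n)"
  shows "(\<Inter>i\<in>I. U f (X i)) \<subseteq> U f (\<lambda>n. \<Inter>i\<in>I. X i n)"
proof
  fix t assume t: "t \<in> (\<Inter>i\<in>I. U f (X i))"
  show "t \<in> U f (\<lambda>n. \<Inter>i\<in>I. X i n)"
  proof (cases "t = []")
    case True then show ?thesis unfolding U_def by blast
  next
    case False
    obtain i0 where i0: "i0 \<in> I" using I by blast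
    obtain n where n: "t ! 0 = f n ! 0" using U_branch[OF f _ False] t i0 by blast
    have "t \<in> clTr (hcat (f n) (X i n))" if i: "i \<in> I" for i
    proof -
      obtain m where m: "t \<in> clTr (hcat (f m) (X i m))" "t ! 0 = f m ! 0"
        using U_branch[OF f _ False] t i by blast
      have "m = n" using fork_inj[OF f] m(2) n by simp
      then show ?thesis using m by simp
    qed
    then have "t \<in> (\<Inter>i\<in>I. clTr (hcat (f n) (X i n)))" by blast
    then have "t \<in> clTr (hcat (f n) (\<Inter>i\<in>I. X i n))" using INT_hcat[OF I, of "\<lambda>i. X i n"] X by blast
    then show ?thesis unfolding U_def by blast
  qed
qed

lemma clTr_UN: "clTr (\<Union>n. A n) = (\<Union>n. clTr (A n))"
  unfolding clTr_def by blast

lemma U_mono: assumes "\<And>n. X n \<subseteq> Y n" shows "U f X \<subseteq> U f Y"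
proof -
  have "clTr (hcat (f n) (X n)) \<subseteq> clTr (hcat (f n) (Y n))" for n by (rule clTr_mono[OF hcat_mono[OF assms]])
  then show ?thesis unfolding U_def by blast
qed

lemma Diter_fork: assumes f: "forking f"
  shows "Diter (\<Union>n. hcat (f n) (Bs n)) a \<subseteq> U f (\<lambda>n. Diter (Bs n) a)"
proof (induction a rule: wf_induct[OF Wwf])
  case (1 a)
  let ?B = "\<Union>n. hcat (f n) (Bs n)"
  show ?case
  proof (cases "lt_set a = {}")
    case True
    have "clTr ?B = (\<Union>n. clTr (hcat (f n) (Bs n)))" by (rule clTr_UN)
    also have "\<dots> \<subseteq> (\<Union>n. clTr (hcat (f n) (clTr (Bs n))))"
    proof -
      have "clTr (hcat (f n) (Bs n)) \<subseteq> clTr (hcat (f n) (clTr (Bs n)))" for n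
        by (rule clTr_mono[OF hcat_mono[OF sub_clTr]])
      then show ?thesis by blast
    qed
    also have "\<dots> \<subseteq> U f (\<lambda>n. clTr (Bs n))" unfolding U_def by blast
    finally show ?thesis using Diter_zero[OF True] by simp
  next
    case ne: False
    show ?thesis
    proof (cases "\<exists>c. is_succ_of a c")
      case True
      then obtain c where c: "is_succ_of a c" by blast
      have "(c, a) \<in> W - Id" using pred_eq(2)[OF c] lt_set_iff by blast
      then have IH: "Diter ?B c \<subseteq> U f (\<lambda>n. Diter (Bs n) c)" using 1 by blast
      have "Diter ?B a = Diie_tree (Diter ?B c)" using Diter_succ[OF c] .
      also have "\<dots> \<subseteq> Diie_tree (U f (\<lambda>n. Diter (Bs n) c))" using Diie_tree_mono[OF IH] .
      also have "\<dots> \<subseteq> U f (\<lambda>n. Diie_tree (Diter (Bs n) c))" using Diie_fork[OF f Diter_closed] .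
      also have "\<dots> = U f (\<lambda>n. Diter (Bs n) a)" using Diter_succ[OF c] by simp
      finally show ?thesis .
    next
      case False
      have "Diter ?B a = (\<Inter>c\<in>lt_set a. Diter ?B c)" using Diter_lim[OF ne False] .
      also have "\<dots> \<subseteq> (\<Inter>c\<in>lt_set a. U f (\<lambda>n. Diter (Bs n) c))" using 1 lt_set_iff by blast
      also have "\<dots> \<subseteq> U f (\<lambda>n. \<Inter>c\<in>lt_set a. Diter (Bs n) c)" by (rule INT_fork[OF ne f Diter_closed])
      also have "\<dots> = U f (\<lambda>n. Diter (Bs n) a)" using Diter_lim[OF ne False] by simp
      finally show ?thesis .
    qed
  qed
qed


lemma finite_clTr: assumes "finite S" shows "finite (clTr S)"
proof -
  have "clTr S \<subseteq> (\<Union>s\<in>S. (\<lambda>k. take k s) ` {..length s})"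
  proof
    fix t assume "t \<in> clTr S"
    then obtain s k where "s \<in> S" "t = take k s" unfolding clTr_def by blast
    then have "t = take (min k (length s)) s" by (simp add: min_def)
    then show "t \<in> (\<Union>s\<in>S. (\<lambda>k. take k s) ` {..length s})" using \<open>s \<in> S\<close> by fastforce
  qed
  moreover have "finite (\<Union>s\<in>S. (\<lambda>k. take k s) ` {..length s})" using assms by blast
  ultimately show ?thesis using finite_subset by blast
qed

lemma clTr_hcat_empty: "clTr (hcat h {}) = {}"
  unfolding clTr_def hcat_def by blast

lemma Diter_clTr: "Diter (clTr S) a = Diter S a"
proof (induction a rule: wf_induct[OF Wwf])
  case (1 a)
  show ?case
  proof (cases "lt_set a = {}")
    case True
    then show ?thesis using Diter_zero[OF True, of S] Diter_zero[OF True, of "clTr S"] clTr_closed[OF closed_clTr] by simp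
  next
    case ne: False
    show ?thesis
    proof (cases "\<exists>c. is_succ_of a c")
      case True
      then obtain c where c: "is_succ_of a c" by blast
      have "(c, a) \<in> W - Id" using pred_eq(2)[OF c] lt_set_iff by blast
      then have "Diter (clTr S) c = Diter S c" using 1 by blast
      then show ?thesis using Diter_succ[OF c, of S] Diter_succ[OF c, of "clTr S"] by simp
    next
      case False
      have "Diter (clTr S) c = Diter S c" if "c \<in> lt_set a" for c using 1 that lt_set_iff by blast
      then show ?thesis using Diter_lim[OF ne False, of S] Diter_lim[OF ne False, of "clTr S"] by simp
    qed
  qed
qed

lemma main: "a \<in> Field W \<Longrightarrow> B \<in> Brooms a \<Longrightarrow>
   finite (Diter B (prime_ord a)) \<and> (even (fin_part a) \<longrightarrow> Diter B (prime_ord a) \<subseteq> {[]})"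
proof (induction a arbitrary: B rule: wf_induct[OF Wwf])
  case (1 a)
  have aF: "a \<in> Field W" and B: "B \<in> Brooms a" using 1(2,3) by auto
  have IH: "finite (Diter B' (prime_ord c)) \<and> (even (fin_part c) \<longrightarrow> Diter B' (prime_ord c) \<subseteq> {[]})"
    if "c \<in> lt_set a" "B' \<in> Brooms c" for c B'
  proof -
    have "(c,a) \<in> W - Id" using that lt_set_iff by blast
    moreover have "c \<in> Field W" using that unfolding lt_set_def using WF1 by blast
    ultimately show ?thesis using 1(1) that(2) by blast
  qed
  have old: "finite (Diter B' (prime_ord a)) \<and> (even (fin_part a) \<longrightarrow> Diter B' (prime_ord a) = {})"
    if c: "c \<in> lt_set a" and B': "B' \<in> Brooms c" for c B'
  proof -
    have fin: "finite (Diter B' (prime_ord c))" using IH[OF c B'] by blast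
    have ca: "(c,a)\<in>W" "c\<noteq>a" using c unfolding lt_set_def by auto
    have pm1: "(prime_ord c, prime_ord a) \<in> W" using prime_mono[OF ca(1)] by blast
    have pm2: "even (fin_part a) \<longrightarrow> prime_ord c \<noteq> prime_ord a" using prime_mono[OF ca(1)] ca(2) by blast
    have "Diter B' (prime_ord a) \<subseteq> Diter B' (prime_ord c)" by (rule Diter_mono[OF pm1])
    then have "finite (Diter B' (prime_ord a))" using fin finite_subset by blast
    moreover have "even (fin_part a) \<longrightarrow> Diter B' (prime_ord a) = {}"
      using Diter_finite_kill[OF pm1 _ fin] pm2 by blast
    ultimately show ?thesis by blast
  qed
  have "Brooms a = (\<Union> (Brooms ` lt_set a)) \<union>
      (if lt_set a = {} then {{[]}}
       else if odd (fin_part a) then {hcat h B | h B. B \<in> Brooms (pred_ord a)}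
       else {(\<Union>n. hcat (f n) (Bs n)) | f Bs. forking f \<and> (\<forall>n. Bs n \<in> \<Union> (Brooms ` lt_set a))})"
    by (rule Brooms_eq)
  then have B': "B \<in> (\<Union> (Brooms ` lt_set a)) \<union>
      (if lt_set a = {} then {{[]}}
       else if odd (fin_part a) then {hcat h B | h B. B \<in> Brooms (pred_ord a)}
       else {(\<Union>n. hcat (f n) (Bs n)) | f Bs. forking f \<and> (\<forall>n. Bs n \<in> \<Union> (Brooms ` lt_set a))})"
    using B by simp
  show ?case
  proof (cases "\<exists>c\<in>lt_set a. B \<in> Brooms c")
    case True
    then show ?thesis using old by blast
  next
    case nold: False
    show ?thesis
    proof (cases "lt_set a = {}")
      case True
      then have "B = {[]}" using B' by simp
      moreover have "prime_ord a = a" "fin_part a = 0" using zero_lemma[OF aF True] by auto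
      moreover have "Diter {[]} a = {[]}" using Diter_zero[OF True] clTr_closed[OF closed_Nil] by simp
      ultimately show ?thesis by simp
    next
      case ne: False
      show ?thesis
      proof (cases "odd (fin_part a)")
        case True
        then obtain h B0 where hb: "B = hcat h B0" "B0 \<in> Brooms (pred_ord a)" using B' nold ne by auto
        have p: "pred_ord a \<in> lt_set a" "even (fin_part (pred_ord a))" "prime_ord (pred_ord a) = prime_ord a"
          using odd_lemma[OF aF True] by auto
        have "Diter B0 (prime_ord a) \<subseteq> {[]}" using IH[OF p(1) hb(2)] p by simp
        then have "Diter B (prime_ord a) \<subseteq> clTr (hcat h {[]})"
          using Diter_hcat[of h B0 "prime_ord a"] hb(1) clTr_mono[OF hcat_mono] by blast
        moreover have "finite (clTr (hcat h {[]}))" by (rule finite_clTr) (simp add: hcat_def)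
        ultimately show ?thesis using True finite_subset by blast
      next
        case False
        then obtain f Bs where fb: "B = (\<Union>n. hcat (f n) (Bs n))" "forking f"
            "\<forall>n. Bs n \<in> \<Union> (Brooms ` lt_set a)" using B' nold ne by auto
        have z: "Diter (Bs n) (prime_ord a) = {}" for n
        proof -
          obtain c where "c \<in> lt_set a" "Bs n \<in> Brooms c" using fb(3) by blast
          then show ?thesis using old False by blast
        qed
        have "Diter B (prime_ord a) \<subseteq> U f (\<lambda>n. Diter (Bs n) (prime_ord a))"
          using Diter_fork[OF fb(2)] fb(1) by simp
        also have "\<dots> = {[]}" unfolding U_def z clTr_hcat_empty by simp
        finally show ?thesis by (simp add: finite_subset)
      qed
    qed
  qed
qed


lemma conc_take: "k \<le> length u \<Longrightarrow> map (conc u \<nu>) [0..<k] = take k u"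
  by (rule nth_equalityI) (auto simp: conc_def)

lemma map_upt_split: "i \<le> j \<Longrightarrow> map g [0..<j] = map g [0..<i] @ map g [i..<j]"
  by (metis le_add_diff_inverse map_append upt_add_eq_append zero_le)

lemma map_upt_comp: "prefix (map g [0..<i]) (map g [0..<j]) \<or> prefix (map g [0..<j]) (map g [0..<i])"
proof (cases "i \<le> j")
  case True then show ?thesis using map_upt_split[OF True, of g] prefixI by metis
next
  case False then have "j \<le> i" by simp
  then show ?thesis using map_upt_split[of j i g] prefixI by metis
qed

lemma prefix_nth': "prefix xs ys \<Longrightarrow> i < length xs \<Longrightarrow> xs ! i = ys ! i"
  unfolding prefix_def by (auto simp: nth_append)

lemma take_map_upt: "take j (map g [0..<k]) = map g [0..<min j k]"
  by (rule nth_equalityI) auto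

lemma closed_clTr_inf: "closed (clTr_inf A)"
  unfolding closed_def
proof (intro ballI allI)
  fix t j assume "t \<in> clTr_inf A"
  then obtain g k where gk: "g \<in> A" "t = map g [0..<k]" unfolding clTr_inf_def by blast
  then have "take j t = map g [0..<min j k]" using take_map_upt by simp
  then show "take j t \<in> clTr_inf A" unfolding clTr_inf_def using gk(1) by blast
qed

lemma subsing_finite: assumes "\<And>x y. x \<in> M \<Longrightarrow> y \<in> M \<Longrightarrow> x = y" shows "finite M"
proof (cases "M = {}")
  case False
  then obtain x where x: "x \<in> M" by blast
  then have "M \<subseteq> {x}" using assms by blast
  then show ?thesis using finite_subset by blast
qed simp

lemma ext_eq: assumes ext: "broom_ext A B" shows "Diie_inf A = clTr B"
proof -
  obtain f \<nu> where f: "\<And>s. s \<in> B \<Longrightarrow> forking (f s)"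
    and A: "A = {conc (s @ f s n) (\<nu> s n) | s n. s \<in> B}"
    using ext unfolding broom_ext_def by blast
  define br where "br s n = conc (s @ f s n) (\<nu> s n)" for s n
  have fne: "f s n \<noteq> []" if "s \<in> B" for s n using f[OF that] unfolding forking_def by blast
  have brA: "br s n \<in> A" if "s \<in> B" for s n using that unfolding A br_def by blast
  have inA: "map (br s n) [0..<k] \<in> clTr_inf A" if "s \<in> B" for s n k
    unfolding clTr_inf_def using brA[OF that] by blast
  have brs: "map (br s n) [0..<length s] = s" for s n
    unfolding br_def by (subst conc_take) auto
  have brs0: "br s n (length s) = f s n ! 0" if "s \<in> B" for s n
    unfolding br_def conc_def using fne[OF that] by (simp add: nth_append)
  show ?thesis
  proof
    show "clTr B \<subseteq> Diie_inf A"
    proof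
      fix t assume "t \<in> clTr B"
      then obtain s k where s: "s \<in> B" "t = take k s" unfolding clTr_def by blast
      define e where "e n = map (br s n) [0..<length s + 1 + n]" for n
      have e_eq: "e n = s @ map (br s n) [length s..<length s + 1 + n]" for n
        unfolding e_def using map_upt_split[of "length s" "length s + 1 + n" "br s n"] brs by simp
      have e_len: "length (e n) = length s + 1 + n" for n unfolding e_def by simp
      have e_nth: "e n ! length s = f s n ! 0" for n
        unfolding e_def using brs0[OF s(1)] by (simp del: upt_Suc)
      have inj: "inj e" by (rule injI) (metis e_len add_left_cancel)
      let ?E = "range e"
      have E1: "?E \<subseteq> clTr_inf A" unfolding e_def using inA[OF s(1)] by blast
      have E2: "infinite ?E" using inj by (simp add: finite_image_iff)
      have E3: "\<forall>x \<in> ?E. prefix s x" using e_eq prefixI by blast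
      have E4: "\<forall>x \<in> ?E. \<forall>y \<in> ?E. x \<noteq> y \<longrightarrow> \<not> prefix x y \<and> \<not> prefix y x"
      proof (intro ballI impI)
        fix x y assume "x \<in> ?E" "y \<in> ?E" "x \<noteq> y"
        then obtain n m where nm: "x = e n" "y = e m" "n \<noteq> m" by blast
        have d: "e n ! length s \<noteq> e m ! length s" using e_nth fork_inj[OF f[OF s(1)]] nm(3) by metis
        have "\<not> prefix (e n) (e m)" using prefix_nth'[of "e n" "e m" "length s"] e_len d by auto
        moreover have "\<not> prefix (e m) (e n)" using prefix_nth'[of "e m" "e n" "length s"] e_len d by auto
        ultimately show "\<not> prefix x y \<and> \<not> prefix y x" using nm by simp
      qed
      have E5: "inj_on length ?E" by (rule inj_onI) (auto simp: e_len)
      have sA: "s \<in> clTr_inf A" using inA[OF s(1), of 0 "length s"] brs by simp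
      have "s \<in> Diie_tree (clTr_inf A)" unfolding Diie_tree_def using sA E1 E2 E3 E4 E5 by blast
      then show "t \<in> Diie_inf A" unfolding Diie_inf_def using closed_Diie_tree[OF closed_clTr_inf] s(2)
        unfolding closed_def by blast
    qed
  next
    show "Diie_inf A \<subseteq> clTr B"
    proof
      fix t assume "t \<in> Diie_inf A"
      then obtain E where t: "E \<subseteq> clTr_inf A" "infinite E" "\<forall>e \<in> E. prefix t e"
          "\<forall>x \<in> E. \<forall>y \<in> E. x \<noteq> y \<longrightarrow> \<not> prefix x y \<and> \<not> prefix y x"
        unfolding Diie_inf_def Diie_tree_def by blast
      show "t \<in> clTr B"
      proof (rule ccontr)
        assume nt: "t \<notin> clTr B"
        define P where "P = {(s,n). s \<in> B \<and> (\<exists>j<length t. s = take j t) \<and> f s n ! 0 = t ! length s}"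
        have "\<exists>p\<in>P. e = map (case_prod br p) [0..<length e]" if e: "e \<in> E" for e
        proof -
          obtain g k where g: "g \<in> A" "e = map g [0..<k]" using t(1) e unfolding clTr_inf_def by blast
          obtain s n where sn: "s \<in> B" "g = br s n" using g(1) unfolding A br_def by blast
          have ek: "e = map (br s n) [0..<length e]" using g sn by simp
          have te: "t = take (length t) e" using t(3) e by (metis prefix_def append_eq_conv_conj)
          have tl: "length t \<le> length e" using t(3) e prefix_length_le by blast
          have tmap: "t = map (br s n) [0..<length t]" using te ek take_map_upt tl by (metis min_absorb1)
          have ls: "length s < length t"
          proof (rule ccontr)
            assume "\<not> length s < length t"
            then have "t = take (length t) s" using tmap unfolding br_def
              by (subst (asm) conc_take) auto
            then show False using nt sn(1) unfolding clTr_def by blast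
          qed
          have "t = s @ map (br s n) [length s..<length t]"
            using tmap map_upt_split[of "length s" "length t" "br s n"] ls brs[of s n] by simp
          then have "s = take (length s) t" by (metis append_eq_conv_conj)
          moreover have "t ! length s = f s n ! 0"
          proof -
            have "map (br s n) [0..<length t] ! length s = br s n (length s)" using ls by simp
            then show ?thesis using brs0[OF sn(1)] tmap by metis
          qed
          ultimately have "(s,n) \<in> P" unfolding P_def using sn(1) ls by auto
          then show ?thesis using ek by (intro bexI[of _ "(s,n)"]) simp_all
        qed
        then obtain g where g: "\<And>e. e \<in> E \<Longrightarrow> g e \<in> P \<and> e = map (case_prod br (g e)) [0..<length e]"
          by metis
        have injg: "inj_on g E"
        proof (rule inj_onI)
          fix x y assume xy: "x \<in> E" "y \<in> E" "g x = g y"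
          show "x = y"
          proof (rule ccontr)
            assume "x \<noteq> y"
            then have "\<not> prefix x y \<and> \<not> prefix y x" using t(4) xy by blast
            moreover have "prefix x y \<or> prefix y x" using g[OF xy(1)] g[OF xy(2)] xy(3) map_upt_comp by metis
            ultimately show False by blast
          qed
        qed
        have finP: "finite P"
        proof -
          let ?M = "\<lambda>j. {n. take j t \<in> B \<and> f (take j t) n ! 0 = t ! length (take j t)}"
          have "finite (?M j)" for j
          proof (rule subsing_finite)
            fix x y assume "x \<in> ?M j" "y \<in> ?M j"
            then show "x = y" using fork_inj[OF f] by auto
          qed
          then have "finite (\<Union>j<length t. {take j t} \<times> ?M j)" by blast
          moreover have "P \<subseteq> (\<Union>j<length t. {take j t} \<times> ?M j)" unfolding P_def by auto
          ultimately show ?thesis using finite_subset by blast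
        qed
        have "g ` E \<subseteq> P" using g by blast
        then have "finite E" using inj_on_finite[OF injg _ finP] by blast
        then show False using t(2) by blast
      qed
    qed
  qed
qed


theorem lemma7p1:
  assumes "\<alpha> \<in> ords_le_omega1"
  shows "(\<forall>B \<in> BroomsO \<alpha>.
            finite (DiterO B (primeO \<alpha>)) \<and>
            (evenO \<alpha> \<longrightarrow> DiterO B (primeO \<alpha>) = {} \<or> DiterO B (primeO \<alpha>) = {[]}))
       \<and> (\<forall>A \<in> BroomExtO \<alpha>.
            finite (DiterO (Diie_inf A) (primeO \<alpha>)) \<and>
            (evenO \<alpha> \<longrightarrow> DiterO (Diie_inf A) (primeO \<alpha>) = {} \<or>
                         DiterO (Diie_inf A) (primeO \<alpha>) = {[]}))"
proof -
  have P1: "\<forall>B \<in> BroomsO \<alpha>. finite (DiterO B (primeO \<alpha>)) \<and>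
            (evenO \<alpha> \<longrightarrow> DiterO B (primeO \<alpha>) = {} \<or> DiterO B (primeO \<alpha>) = {[]})"
  proof
    fix B assume B: "B \<in> BroomsO \<alpha>"
    show "finite (DiterO B (primeO \<alpha>)) \<and>
            (evenO \<alpha> \<longrightarrow> DiterO B (primeO \<alpha>) = {} \<or> DiterO B (primeO \<alpha>) = {[]})"
    proof (cases \<alpha>)
      case None
      then obtain a where a: "a \<in> Field W" "B \<in> Brooms a" using B unfolding BroomsO_def by auto
      have fin: "finite (Diter B (prime_ord a))" using main[OF a] by blast
      have pF: "prime_ord a \<in> Field W" using prime_le[OF a(1)] WF1 by blast
      obtain q where q: "q \<in> Field W" "(prime_ord a, q) \<in> W" "prime_ord a \<noteq> q" using Wnomax[OF pF] by blast
      have "Diter B q = {}" using Diter_finite_kill[OF q(2,3) fin] .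
      then have "DiterO B (primeO \<alpha>) = {}" using None q(1) unfolding DiterO_def primeO_def by auto
      then show ?thesis by simp
    next
      case (Some a)
      then have a: "a \<in> Field W" using assms unfolding ords_le_omega1_def by auto
      have "B \<in> Brooms a" using B Some unfolding BroomsO_def by simp
      then have "finite (Diter B (prime_ord a)) \<and> (even (fin_part a) \<longrightarrow> Diter B (prime_ord a) \<subseteq> {[]})"
        using main[OF a] by blast
      then show ?thesis using Some unfolding DiterO_def primeO_def evenO_def by (auto simp: subset_singleton_iff)
    qed
  qed
  have DO: "DiterO (clTr B) x = DiterO B x" for B x
    unfolding DiterO_def using Diter_clTr by (simp split: option.split)
  have P2: "\<forall>A \<in> BroomExtO \<alpha>.
            finite (DiterO (Diie_inf A) (primeO \<alpha>)) \<and>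
            (evenO \<alpha> \<longrightarrow> DiterO (Diie_inf A) (primeO \<alpha>) = {} \<or>
                         DiterO (Diie_inf A) (primeO \<alpha>) = {[]})"
  proof
    fix A assume "A \<in> BroomExtO \<alpha>"
    then obtain B where B: "B \<in> BroomsO \<alpha>" "broom_ext A B" unfolding BroomExtO_def by blast
    have "Diie_inf A = clTr B" using ext_eq[OF B(2)] .
    then show "finite (DiterO (Diie_inf A) (primeO \<alpha>)) \<and>
            (evenO \<alpha> \<longrightarrow> DiterO (Diie_inf A) (primeO \<alpha>) = {} \<or>
                         DiterO (Diie_inf A) (primeO \<alpha>) = {[]})" using P1 B(1) DO by simp
  qed
  show ?thesis using P1 P2 by blast
qed
end
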